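(* Let $G'$ be a divisible design graph on $n$ vertices whose spectrum consists of $k$ with multiplicity $1$, $\sqrt{k}$ with multiplicity $m$, $-1$ with multiplicity $k$, and $-\sqrt{k}$ with multiplicity $m$, so that $n=2m+k+1$. If $n$ divides $k^2-1$, then $G'$ is an antipodal distance-regular graph of diameter $3$ with intersection numbers $a_1=c_2=(k^2-1)/n$.
   Context: All graphs are finite, simple and undirected; eigenvalues of a graph are those of its adjacency matrix. A Deza graph with parameters $(n,k,b,a)$, where $b\geqslant a$, is a $k$-regular graph on $n$ vertices, which is neither complete nor edgeless, such that any two distinct vertices have exactly $b$ or exactly $a$ common neighbours. If $b>a$, the children $G_A$ and $G_B$ of $G$ are the graphs on the vertex set of $G$ in which two distinct vertices are adjacent if and only if they have exactly $a$ (for $G_A$), respectively exactly $b$ (for $G_B$), common neighbours in $G$. A divisible design graph is a Deza graph whose two children are, in some order, a complete multipartite graph with at least two parts, all of the same size at least $2$, and its complement (a disjoint union of at least two cliques of equal size). A connected graph $G=(V,E)$ of diameter $d$ is distance-regular if there are numbers $a_i,b_i,c_i$ ($0\leqslant i\leqslant d$), its intersection numbers, such that for all $x,y\in V$ at distance $i$, the vertex $y$ has exactly $b_i$ neighbours at distance $i+1$ from $x$, $a_i$ neighbours at distance $i$ from $x$, and $c_i$ neighbours at distance $i-1$ from $x$. A distance-regular graph of diameter $d$ is antipodal if the graph on $V$ in which two vertices are adjacent iff they are at distance $d$ is a disjoint union of cliques. *)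

theory Defs
  imports "Jordan_Normal_Form.Char_Poly" "HOL-Library.Disjoint_Sets"
begin

definition simple_graph :: "nat \<Rightarrow> (nat \<Rightarrow> nat \<Rightarrow> bool) \<Rightarrow> bool" where
  "simple_graph n E \<longleftrightarrow> (\<forall>x y. E x y \<longrightarrow> x < n \<and> y < n) \<and> (\<forall>x y. E x y \<longrightarrow> E y x) \<and> (\<forall>x. \<not> E x x)"

definition common_nbrs :: "nat \<Rightarrow> (nat \<Rightarrow> nat \<Rightarrow> bool) \<Rightarrow> nat \<Rightarrow> nat \<Rightarrow> nat" where
  "common_nbrs n E x y = card {z. z < n \<and> E x z \<and> E y z}"

definition regular_graph :: "nat \<Rightarrow> (nat \<Rightarrow> nat \<Rightarrow> bool) \<Rightarrow> nat \<Rightarrow> bool" where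
  "regular_graph n E k \<longleftrightarrow> (\<forall>x < n. card {y. y < n \<and> E x y} = k)"

definition deza_graph :: "nat \<Rightarrow> (nat \<Rightarrow> nat \<Rightarrow> bool) \<Rightarrow> nat \<Rightarrow> nat \<Rightarrow> nat \<Rightarrow> bool" where
  "deza_graph n E k b a \<longleftrightarrow> simple_graph n E \<and> regular_graph n E k \<and> b \<ge> a
     \<and> (\<exists>x y. x < n \<and> y < n \<and> x \<noteq> y \<and> \<not> E x y)
     \<and> (\<exists>x y. E x y)
     \<and> (\<forall>x y. x < n \<longrightarrow> y < n \<longrightarrow> x \<noteq> y \<longrightarrow>
            common_nbrs n E x y = b \<or> common_nbrs n E x y = a)"

definition child_A :: "nat \<Rightarrow> (nat \<Rightarrow> nat \<Rightarrow> bool) \<Rightarrow> nat \<Rightarrow> nat \<Rightarrow> nat \<Rightarrow> bool" where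
  "child_A n E a x y \<longleftrightarrow> x < n \<and> y < n \<and> x \<noteq> y \<and> common_nbrs n E x y = a"

definition child_B :: "nat \<Rightarrow> (nat \<Rightarrow> nat \<Rightarrow> bool) \<Rightarrow> nat \<Rightarrow> nat \<Rightarrow> nat \<Rightarrow> bool" where
  "child_B n E b x y \<longleftrightarrow> x < n \<and> y < n \<and> x \<noteq> y \<and> common_nbrs n E x y = b"

definition union_of_cliques :: "nat \<Rightarrow> (nat \<Rightarrow> nat \<Rightarrow> bool) \<Rightarrow> bool" where
  "union_of_cliques n R \<longleftrightarrow> (\<exists>P. partition_on {0..<n} P \<and>
      (\<forall>x y. x < n \<longrightarrow> y < n \<longrightarrow> (R x y \<longleftrightarrow> x \<noteq> y \<and> (\<exists>B\<in>P. x \<in> B \<and> y \<in> B))))"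

definition equal_cliques :: "nat \<Rightarrow> (nat \<Rightarrow> nat \<Rightarrow> bool) \<Rightarrow> bool" where
  "equal_cliques n R \<longleftrightarrow> (\<exists>P s. partition_on {0..<n} P \<and> card P \<ge> 2 \<and> s \<ge> 2 \<and> (\<forall>B\<in>P. card B = s) \<and>
      (\<forall>x y. x < n \<longrightarrow> y < n \<longrightarrow> (R x y \<longleftrightarrow> x \<noteq> y \<and> (\<exists>B\<in>P. x \<in> B \<and> y \<in> B))))"

definition equal_complete_multipartite :: "nat \<Rightarrow> (nat \<Rightarrow> nat \<Rightarrow> bool) \<Rightarrow> bool" where
  "equal_complete_multipartite n R \<longleftrightarrow> (\<exists>P s. partition_on {0..<n} P \<and> card P \<ge> 2 \<and> s \<ge> 2 \<and> (\<forall>B\<in>P. card B = s) \<and>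
      (\<forall>x y. x < n \<longrightarrow> y < n \<longrightarrow> (R x y \<longleftrightarrow> \<not> (\<exists>B\<in>P. x \<in> B \<and> y \<in> B))))"

definition complement_graph :: "nat \<Rightarrow> (nat \<Rightarrow> nat \<Rightarrow> bool) \<Rightarrow> nat \<Rightarrow> nat \<Rightarrow> bool" where
  "complement_graph n R x y \<longleftrightarrow> x < n \<and> y < n \<and> x \<noteq> y \<and> \<not> R x y"

definition divisible_design_graph :: "nat \<Rightarrow> (nat \<Rightarrow> nat \<Rightarrow> bool) \<Rightarrow> nat \<Rightarrow> nat \<Rightarrow> nat \<Rightarrow> bool" where
  "divisible_design_graph n E k b a \<longleftrightarrow> deza_graph n E k b a \<and> b > a \<and>
     ((equal_complete_multipartite n (child_A n E a) \<and> equal_cliques n (child_B n E b)) \<or>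
      (equal_complete_multipartite n (child_B n E b) \<and> equal_cliques n (child_A n E a)))"

definition adj_matrix :: "nat \<Rightarrow> (nat \<Rightarrow> nat \<Rightarrow> bool) \<Rightarrow> real mat" where
  "adj_matrix n E = mat n n (\<lambda>(i, j). if E i j then 1 else 0)"

fun walk :: "nat \<Rightarrow> (nat \<Rightarrow> nat \<Rightarrow> bool) \<Rightarrow> nat \<Rightarrow> nat \<Rightarrow> nat \<Rightarrow> bool" where
  "walk n E 0 x y \<longleftrightarrow> x = y"
| "walk n E (Suc i) x y \<longleftrightarrow> (\<exists>z. z < n \<and> E x z \<and> walk n E i z y)"

definition graph_connected :: "nat \<Rightarrow> (nat \<Rightarrow> nat \<Rightarrow> bool) \<Rightarrow> bool" where
  "graph_connected n E \<longleftrightarrow> (\<forall>x y. x < n \<longrightarrow> y < n \<longrightarrow> (\<exists>i. walk n E i x y))"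

definition gdist :: "nat \<Rightarrow> (nat \<Rightarrow> nat \<Rightarrow> bool) \<Rightarrow> nat \<Rightarrow> nat \<Rightarrow> nat" where
  "gdist n E x y = (LEAST i. walk n E i x y)"

definition diameter :: "nat \<Rightarrow> (nat \<Rightarrow> nat \<Rightarrow> bool) \<Rightarrow> nat" where
  "diameter n E = Max {gdist n E x y | x y. x < n \<and> y < n}"

definition distance_regular :: "nat \<Rightarrow> (nat \<Rightarrow> nat \<Rightarrow> bool) \<Rightarrow> nat \<Rightarrow>
    (nat \<Rightarrow> nat) \<Rightarrow> (nat \<Rightarrow> nat) \<Rightarrow> (nat \<Rightarrow> nat) \<Rightarrow> bool" where
  "distance_regular n E d ai bi ci \<longleftrightarrow> graph_connected n E \<and> diameter n E = d \<and>
     (\<forall>i \<le> d. \<forall>x y. x < n \<longrightarrow> y < n \<longrightarrow> gdist n E x y = i \<longrightarrow>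
        card {z. z < n \<and> E y z \<and> gdist n E x z = i + 1} = bi i \<and>
        card {z. z < n \<and> E y z \<and> gdist n E x z = i} = ai i \<and>
        card {z. z < n \<and> E y z \<and> gdist n E x z + 1 = i} = ci i)"

definition antipodal :: "nat \<Rightarrow> (nat \<Rightarrow> nat \<Rightarrow> bool) \<Rightarrow> bool" where
  "antipodal n E \<longleftrightarrow> union_of_cliques n (\<lambda>x y. gdist n E x y = diameter n E)"

end

theory Submission
  imports Defs "Jordan_Normal_Form.Schur_Decomposition"
begin

lemma trace_comm:
  fixes X Y :: "'a::comm_ring_1 mat"
  assumes "X \<in> carrier_mat n n" "Y \<in> carrier_mat n n"
  shows "(\<Sum>i<n. (X*Y)$$(i,i)) = (\<Sum>i<n. (Y*X)$$(i,i))"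
proof -
  have "(\<Sum>i<n. (X*Y)$$(i,i)) = (\<Sum>i<n. \<Sum>j<n. X$$(i,j) * Y$$(j,i))"
    using assms by (auto simp: scalar_prod_def lessThan_atLeast0 intro!: sum.cong)
  also have "\<dots> = (\<Sum>j<n. \<Sum>i<n. Y$$(j,i) * X$$(i,j))"
    by (subst sum.swap) (simp add: mult.commute)
  also have "\<dots> = (\<Sum>i<n. (Y*X)$$(i,i))"
    using assms by (auto simp: scalar_prod_def lessThan_atLeast0 intro!: sum.cong)
  finally show ?thesis .
qed

lemma ut_mult:
  fixes B C :: "'a::comm_ring_1 mat"
  assumes C: "C \<in> carrier_mat n n" and B: "B \<in> carrier_mat n n"
    and uC: "upper_triangular C" and uB: "upper_triangular B"
    and i: "i < n" and j: "j \<le> i"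
  shows "(C*B)$$(i,j) = (if i = j then C$$(i,i) * B$$(i,i) else 0)"
proof -
  have "(C*B)$$(i,j) = (\<Sum>l\<in>{0..<n}. C$$(i,l) * B$$(l,j))"
    using assms by (auto simp: scalar_prod_def)
  also have "\<dots> = (\<Sum>l\<in>{0..<n}. if l = i then (if i = j then C$$(i,i) * B$$(i,i) else 0) else 0)"
  proof (rule sum.cong[OF refl])
    fix l assume l: "l \<in> {0..<n}"
    show "C$$(i,l) * B$$(l,j) = (if l = i then (if i = j then C$$(i,i) * B$$(i,i) else 0) else 0)"
    proof (cases "l < i")
      case True then show ?thesis using uC C i by (auto simp: upper_triangular_def)
    next
      case False
      show ?thesis
      proof (cases "l = i \<and> i = j")
        case True then show ?thesis by auto
      next
        case F2: False
        then have "j < l" using False j by auto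
        then show ?thesis using uB B l False F2 by (auto simp: upper_triangular_def)
      qed
    qed
  qed
  also have "\<dots> = (if i = j then C$$(i,i) * B$$(i,i) else 0)"
    using i by simp
  finally show ?thesis .
qed

lemma ut_pow:
  fixes B :: "'a::comm_ring_1 mat"
  assumes B: "B \<in> carrier_mat n n" and uB: "upper_triangular B"
  shows "upper_triangular (B ^\<^sub>m j) \<and> (\<forall>i<n. (B ^\<^sub>m j)$$(i,i) = B$$(i,i)^j)"
proof (induction j)
  case 0
  then show ?case using B by auto
next
  case (Suc j)
  have C: "B ^\<^sub>m j \<in> carrier_mat n n" using B by simp
  have ut: "upper_triangular (B ^\<^sub>m Suc j)"
    unfolding upper_triangular_def
  proof (intro allI impI)
    fix i l assume i: "i < dim_row (B ^\<^sub>m Suc j)" and l: "l < i"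
    then have i': "i < n" using B by simp
    show "(B ^\<^sub>m Suc j) $$ (i, l) = 0"
      using ut_mult[OF C B conjunct1[OF Suc.IH] uB i', of l] l by simp
  qed
  moreover have "\<forall>i<n. (B ^\<^sub>m Suc j)$$(i,i) = B$$(i,i)^Suc j"
    using ut_mult[OF C B conjunct1[OF Suc.IH] uB] Suc.IH by simp
  ultimately show ?case by simp
qed

lemma spectral_trace:
  fixes A :: "real mat"
  assumes A: "A \<in> carrier_mat n n"
    and c: "char_poly A = (\<Prod>e\<leftarrow>es. [:- e, 1:])"
  shows "length es = n \<and> (\<Sum>i<n. (A ^\<^sub>m j)$$(i,i)) = (\<Sum>e\<leftarrow>es. e^j)"
proof -
  obtain B P Q where s: "schur_decomposition A es = (B,P,Q)"
    by (cases "schur_decomposition A es") auto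
  from schur_decomposition[OF A c s] have
    sim: "similar_mat_wit A B P Q" and uB: "upper_triangular B" and dB: "diag_mat B = es" by auto
  from similar_mat_witD2[OF A sim] have
    Bc: "B \<in> carrier_mat n n" and Pc: "P \<in> carrier_mat n n" and Qc: "Q \<in> carrier_mat n n"
    and QP: "Q * P = 1\<^sub>m n" by auto
  have len: "length es = n" using dB Bc by (auto simp: diag_mat_def)
  have Aj: "A ^\<^sub>m j = P * B ^\<^sub>m j * Q" by (rule similar_mat_wit_pow_id[OF sim])
  have Bj: "B ^\<^sub>m j \<in> carrier_mat n n" using Bc by simp
  have "(\<Sum>i<n. (A ^\<^sub>m j)$$(i,i)) = (\<Sum>i<n. ((P * B ^\<^sub>m j) * Q)$$(i,i))" by (simp add: Aj)
  also have "\<dots> = (\<Sum>i<n. (Q * (P * B ^\<^sub>m j))$$(i,i))"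
    by (rule trace_comm) (use Pc Qc Bj in auto)
  also have "Q * (P * B ^\<^sub>m j) = B ^\<^sub>m j"
  proof -
    have "Q * (P * B ^\<^sub>m j) = (Q * P) * B ^\<^sub>m j"
      by (rule assoc_mult_mat[symmetric, OF Qc Pc Bj])
    also have "\<dots> = B ^\<^sub>m j" using QP Bj by (simp add: left_mult_one_mat)
    finally show ?thesis .
  qed
  also have "(\<Sum>i<n. (B ^\<^sub>m j)$$(i,i)) = (\<Sum>i<n. (es ! i)^j)"
    using ut_pow[OF Bc uB, of j] dB Bc by (auto simp: diag_mat_def)
  also have "\<dots> = (\<Sum>e\<leftarrow>es. e^j)"
    using len by (simp add: sum_list_sum_nth lessThan_atLeast0)
  finally show ?thesis using len by simp
qed

definition av :: "(nat \<Rightarrow> nat \<Rightarrow> bool) \<Rightarrow> nat \<Rightarrow> nat \<Rightarrow> real" where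
  "av E x y = (if E x y then 1 else 0)"

fun wc :: "nat \<Rightarrow> (nat \<Rightarrow> nat \<Rightarrow> bool) \<Rightarrow> nat \<Rightarrow> nat \<Rightarrow> nat \<Rightarrow> real" where
  "wc n E 0 x y = (if x = y then 1 else 0)"
| "wc n E (Suc j) x y = (\<Sum>z<n. wc n E j x z * av E z y)"

lemma adj_carrier: "adj_matrix n E \<in> carrier_mat n n"
  by (simp add: adj_matrix_def)

lemma adj_pow:
  assumes "x < n" "y < n"
  shows "(adj_matrix n E ^\<^sub>m j)$$(x,y) = wc n E j x y"
  using assms
proof (induction j arbitrary: y)
  case 0
  then show ?case by (simp add: adj_matrix_def)
next
  case (Suc j)
  have "(adj_matrix n E ^\<^sub>m Suc j)$$(x,y) = (\<Sum>z\<in>{0..<n}. (adj_matrix n E ^\<^sub>m j)$$(x,z) * (adj_matrix n E)$$(z,y))"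
    using Suc.prems by (simp add: adj_matrix_def scalar_prod_def)
  also have "\<dots> = (\<Sum>z<n. wc n E j x z * av E z y)"
    using Suc by (auto simp: adj_matrix_def av_def lessThan_atLeast0 intro!: sum.cong)
  finally show ?case by simp
qed

lemma wc_add:
  assumes "y < n"
  shows "wc n E (i + j) x y = (\<Sum>z<n. wc n E i x z * wc n E j z y)"
  using assms
proof (induction j arbitrary: y)
  case 0
  have "(\<Sum>z<n. wc n E i x z * wc n E 0 z y) = (\<Sum>z<n. if z = y then wc n E i x z else 0)"
    by (rule sum.cong) auto
  also have "\<dots> = wc n E i x y" using 0 by simp
  finally show ?case by simp
next
  case (Suc j)
  have "wc n E (i + Suc j) x y = (\<Sum>u<n. wc n E (i+j) x u * av E u y)" by simp
  also have "\<dots> = (\<Sum>u<n. (\<Sum>z<n. wc n E i x z * wc n E j z u) * av E u y)"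
    using Suc.IH by (intro sum.cong) auto
  also have "\<dots> = (\<Sum>z<n. wc n E i x z * (\<Sum>u<n. wc n E j z u * av E u y))"
  proof -
    have "(\<Sum>u<n. (\<Sum>z<n. wc n E i x z * wc n E j z u) * av E u y)
        = (\<Sum>u<n. \<Sum>z<n. wc n E i x z * (wc n E j z u * av E u y))"
      by (simp add: sum_distrib_right mult.assoc)
    also have "\<dots> = (\<Sum>z<n. \<Sum>u<n. wc n E i x z * (wc n E j z u * av E u y))"
      by (rule sum.swap)
    also have "\<dots> = (\<Sum>z<n. wc n E i x z * (\<Sum>u<n. wc n E j z u * av E u y))"
      by (simp add: sum_distrib_left)
    finally show ?thesis .
  qed
  finally show ?case by simp
qed

lemma sum_ind_card:
  fixes n :: nat shows "(\<Sum>z<n. if P z then (1::real) else 0) = real (card {z. z < n \<and> P z})"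
proof -
  have "real (card {z. z < n \<and> P z}) = (\<Sum>z\<in>{z. z < n \<and> P z}. (1::real))" by simp
  also have "{z. z < n \<and> P z} = {z\<in>{..<n}. P z}" by auto
  also have "(\<Sum>z\<in>{z\<in>{..<n}. P z}. (1::real)) = (\<Sum>z<n. if P z then 1 else 0)"
    by (rule sum.inter_filter) simp
  finally show ?thesis by simp
qed

lemma wc1:
  assumes "x < n" shows "wc n E 1 x y = av E x y"
proof -
  have "wc n E 1 x y = (\<Sum>z<n. if z = x then av E x y else 0)"
    unfolding One_nat_def wc.simps by (intro sum.cong) auto
  then show ?thesis using assms by simp
qed

lemma wc2:
  assumes "simple_graph n E" "x < n"
  shows "wc n E 2 x y = real (card {z. z < n \<and> E x z \<and> E y z})"
proof -
  have "wc n E 2 x y = wc n E (Suc 1) x y" by (simp add: numeral_2_eq_2)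
  also have "\<dots> = (\<Sum>z<n. wc n E 1 x z * av E z y)" by (simp only: wc.simps)
  also have "\<dots> = (\<Sum>z<n. av E x z * av E z y)"
    by (simp only: wc1[OF assms(2)])
  also have "\<dots> = (\<Sum>z<n. if E x z \<and> E y z then 1 else 0)"
    using assms(1) by (intro sum.cong) (auto simp: av_def simple_graph_def)
  finally show ?thesis by (simp add: sum_ind_card)
qed

lemma row_av:
  assumes "regular_graph n E k" "x < n"
  shows "(\<Sum>y<n. av E x y) = real k"
  using assms unfolding av_def regular_graph_def by (simp add: sum_ind_card)

definition dd :: "nat \<Rightarrow> nat \<Rightarrow> real" where "dd x y = (if x = y then 1 else 0)"

locale dsetup =
  fixes n :: nat and E :: "nat \<Rightarrow> nat \<Rightarrow> bool" and k :: nat and P :: "nat set set"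
    and s l1 l2 m :: nat
  assumes sg: "simple_graph n E" and reg: "regular_graph n E k"
    and part: "partition_on {0..<n} P" and cP: "card P \<ge> 2" and s2: "s \<ge> 2"
    and cB: "\<forall>B\<in>P. card B = s"
    and cn: "\<forall>x y. x < n \<longrightarrow> y < n \<longrightarrow> x \<noteq> y \<longrightarrow>
              common_nbrs n E x y = (if (\<exists>B\<in>P. x \<in> B \<and> y \<in> B) then l1 else l2)"
    and ne: "l1 \<noteq> l2"
    and cp: "char_poly (adj_matrix n E) =
           [:- real k, 1:] * [:- sqrt (real k), 1:] ^ m * [:1, 1:] ^ k * [:sqrt (real k), 1:] ^ m"
    and dv: "int n dvd int k ^ 2 - 1"
begin

definition same :: "nat \<Rightarrow> nat \<Rightarrow> bool" where
  "same x y \<longleftrightarrow> (\<exists>B\<in>P. x \<in> B \<and> y \<in> B)"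

definition ss :: "nat \<Rightarrow> nat \<Rightarrow> real" where "ss x y = (if same x y then 1 else 0)"

abbreviation p where "p \<equiv> card P"

lemma E_lt: "E x y \<Longrightarrow> x < n \<and> y < n" using sg by (auto simp: simple_graph_def)
lemma E_sym: "E x y \<Longrightarrow> E y x" using sg by (auto simp: simple_graph_def)
lemma E_irr: "\<not> E x x" using sg by (auto simp: simple_graph_def)

lemma block_sub: "B \<in> P \<Longrightarrow> B \<subseteq> {0..<n}"
  using partition_onD1[OF part] by auto

lemma ex_block: "x < n \<Longrightarrow> \<exists>B\<in>P. x \<in> B"
  using partition_onD1[OF part] by auto

lemma block_uniq: "B \<in> P \<Longrightarrow> B' \<in> P \<Longrightarrow> x \<in> B \<Longrightarrow> x \<in> B' \<Longrightarrow> B = B'"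
  using partition_onD2[OF part] unfolding disjoint_def by blast

lemma finP: "finite P"
  using finite_elements[OF _ part] by simp

lemma n_eq: "n = p * s"
proof -
  have "card (\<Union>P) = n" using partition_onD1[OF part] by (metis card_atLeastLessThan diff_zero)
  then have "n = card (\<Union>P)" by simp
  also have "\<dots> = sum card P"
    by (rule card_Union_disjoint[OF partition_onD2[OF part]])
       (meson block_sub finite_atLeastLessThan finite_subset)
  also have "\<dots> = p * s" using cB by simp
  finally show ?thesis .
qed

lemma same_refl: "x < n \<Longrightarrow> same x x" using ex_block by (auto simp: same_def)
lemma same_sym: "same x y \<Longrightarrow> same y x" by (auto simp: same_def)
lemma same_trans: "same x y \<Longrightarrow> same y z \<Longrightarrow> same x z"
  unfolding same_def using block_uniq by metis
lemma same_lt: "same x y \<Longrightarrow> x < n \<and> y < n"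
  unfolding same_def using block_sub by fastforce

lemma card_same: assumes "x < n" shows "card {z. z < n \<and> same x z} = s"
proof -
  obtain B where B: "B \<in> P" "x \<in> B" using ex_block assms by blast
  have "{z. z < n \<and> same x z} = B"
  proof
    show "{z. z < n \<and> same x z} \<subseteq> B" using B block_uniq by (auto simp: same_def)
    show "B \<subseteq> {z. z < n \<and> same x z}" using B block_sub[OF B(1)] by (auto simp: same_def)
  qed
  then show ?thesis using cB B by simp
qed

lemma n_pos: "n > 0" using n_eq cP s2
  by (metis gr0I le_zero_eq mult_is_0 not_numeral_le_zero)

lemma common_val: "x < n \<Longrightarrow> y < n \<Longrightarrow> x \<noteq> y \<Longrightarrow>
   card {z. z < n \<and> E x z \<and> E y z} = (if same x y then l1 else l2)"
  using cn by (auto simp: common_nbrs_def same_def)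

lemma common_self: "x < n \<Longrightarrow> card {z. z < n \<and> E x z \<and> E x z} = k"
  using reg by (auto simp: regular_graph_def)

lemma sum_dd_left: "y < n \<Longrightarrow> (\<Sum>z<n. dd x z * f z) = (if x < n then f x else 0)"
proof -
  have "(\<Sum>z<n. dd x z * f z) = (\<Sum>z<n. if z = x then f x else 0)"
    by (rule sum.cong) (auto simp: dd_def)
  then show ?thesis by simp
qed

lemma sum_dd_right: "(\<Sum>z<n. f z * dd z y) = (if y < n then f y else 0)"
proof -
  have "(\<Sum>z<n. f z * dd z y) = (\<Sum>z<n. if z = y then f y else 0)"
    by (rule sum.cong) (auto simp: dd_def)
  then show ?thesis by simp
qed

lemma sum_ss: "x < n \<Longrightarrow> (\<Sum>z<n. ss x z) = s"
  using card_same sum_ind_card[of "same x" n] by (simp add: ss_def)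

lemma sum_ss': "y < n \<Longrightarrow> (\<Sum>z<n. ss z y) = s"
proof -
  assume y: "y < n"
  have "(\<Sum>z<n. ss z y) = (\<Sum>z<n. ss y z)"
    by (rule sum.cong) (auto simp: ss_def intro: same_sym)
  then show ?thesis using sum_ss[OF y] by simp
qed

lemma sum_ss_ss: assumes "x < n" "y < n"
  shows "(\<Sum>z<n. ss x z * ss z y) = s * ss x y"
proof -
  have "(\<Sum>z<n. ss x z * ss z y) = (\<Sum>z<n. if same x z \<and> same z y then 1 else 0)"
    by (rule sum.cong) (auto simp: ss_def)
  also have "\<dots> = real (card {z. z < n \<and> same x z \<and> same z y})" by (rule sum_ind_card)
  also have "\<dots> = s * ss x y"
  proof (cases "same x y")
    case True
    then have "{z. z < n \<and> same x z \<and> same z y} = {z. z < n \<and> same x z}"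
      by (auto intro: same_trans same_sym)
    then show ?thesis using True card_same[OF assms(1)] by (simp add: ss_def)
  next
    case False
    then have "{z. z < n \<and> same x z \<and> same z y} = {}"
      by (auto intro: same_trans)
    then show ?thesis using False by (simp add: ss_def)
  qed
  finally show ?thesis .
qed

lemma dd_refl [simp]: "dd x x = 1" by (simp add: dd_def)
lemma ss_refl: "x < n \<Longrightarrow> ss x x = 1" by (simp add: ss_def same_refl)

lemma mult3:
  fixes a b c a' b' c' :: real
  assumes x: "x < n" and y: "y < n"
  shows "(\<Sum>z<n. (a * dd x z + b * ss x z + c) * (a' * dd z y + b' * ss z y + c'))
    = a*a' * dd x y + (a*b' + b*a' + s*b*b') * ss x y + (a*c' + c*a' + s*b*c' + s*c*b' + n*c*c')"
proof -
  have "(\<Sum>z<n. (a * dd x z + b * ss x z + c) * (a' * dd z y + b' * ss z y + c'))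
     = (\<Sum>z<n. a*a' * (dd x z * dd z y) + a*b' * (dd x z * ss z y) + a*c' * (dd x z * 1)
          + b*a' * (ss x z * dd z y) + b*b' * (ss x z * ss z y) + b*c' * ss x z
          + c*a' * dd z y + c*b' * ss z y + c*c')"
    by (rule sum.cong) (auto simp: algebra_simps)
  also have "\<dots> = a*a' * (\<Sum>z<n. dd x z * dd z y) + a*b' * (\<Sum>z<n. dd x z * ss z y)
          + a*c' * (\<Sum>z<n. dd x z * 1)
          + b*a' * (\<Sum>z<n. ss x z * dd z y) + b*b' * (\<Sum>z<n. ss x z * ss z y) + b*c' * (\<Sum>z<n. ss x z)
          + c*a' * (\<Sum>z<n. dd z y) + c*b' * (\<Sum>z<n. ss z y) + c*c' * n"
    by (simp add: sum.distrib sum_distrib_left)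
  also have "\<dots> = a*a' * dd x y + a*b' * ss x y + a*c' + b*a' * ss x y + b*b' * (s * ss x y)
         + b*c' * s + c*a' + c*b' * s + c*c'*n"
  proof -
    have "(\<Sum>z<n. dd z y) = (\<Sum>z<n. 1 * dd z y)" by simp
    then have 1: "(\<Sum>z<n. dd z y) = 1" using sum_dd_right[of "\<lambda>_. 1" y] y by simp
    show ?thesis
      using x y sum_dd_left[OF y, of x] sum_dd_right[of "\<lambda>z. ss x z" y] sum_dd_left[OF y, of x "\<lambda>_. 1"]
        sum_dd_right[of "\<lambda>z. dd x z" y] sum_ss_ss[OF x y] sum_ss[OF x] sum_ss'[OF y] 1 ss_refl
      by simp
  qed
  finally show ?thesis by (simp add: algebra_simps)
qed

end

context dsetup begin

lemma s_pos: "real s > 0" using s2 by simp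
lemma n_real: "real n = real p * real s" using n_eq by simp

lemma mult_ev:
  assumes x: "x < n" and y: "y < n"
  shows "(\<Sum>z<n. (a * dd x z + (b-a)/s * ss x z + (c-b)/n) * (a' * dd z y + (b'-a')/s * ss z y + (c'-b')/n))
    = a*a' * dd x y + (b*b' - a*a')/s * ss x y + (c*c' - b*b')/n"
proof -
  have sn: "real s \<noteq> 0" "real n \<noteq> 0" using s_pos n_pos by auto
  have "(\<Sum>z<n. (a * dd x z + (b-a)/s * ss x z + (c-b)/n) * (a' * dd z y + (b'-a')/s * ss z y + (c'-b')/n))
    = a*a' * dd x y + (a*((b'-a')/s) + ((b-a)/s)*a' + s*((b-a)/s)*((b'-a')/s)) * ss x y
      + (a*((c'-b')/n) + ((c-b)/n)*a' + s*((b-a)/s)*((c'-b')/n) + s*((c-b)/n)*((b'-a')/s) + n*((c-b)/n)*((c'-b')/n))"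
    by (rule mult3[OF x y, where a=a and b="(b-a)/real s" and c="(c-b)/real n"
         and a'=a' and b'="(b'-a')/real s" and c'="(c'-b')/real n"])
  also have "(a*((b'-a')/s) + ((b-a)/s)*a' + s*((b-a)/s)*((b'-a')/s)) = (b*b' - a*a')/s"
    using sn by (simp add: field_simps; simp add: algebra_simps)
  also have "(a*((c'-b')/n) + ((c-b)/n)*a' + s*((b-a)/s)*((c'-b')/n) + s*((c-b)/n)*((b'-a')/s) + n*((c-b)/n)*((c'-b')/n))
      = (c*c' - b*b')/n"
    using sn by (simp add: field_simps; simp add: algebra_simps)
  finally show ?thesis .
qed

definition t0 :: real where "t0 = real k - real l1"
definition t1 :: real where "t1 = t0 + real s * (real l1 - real l2)"
definition t2 :: real where "t2 = t1 + real n * real l2"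

lemma wc2_ev: assumes x: "x < n" and y: "y < n"
  shows "wc n E 2 x y = t0 * dd x y + (t1 - t0)/s * ss x y + (t2 - t1)/n"
proof -
  have sn: "real s \<noteq> 0" "real n \<noteq> 0" using s_pos n_pos by auto
  have r: "(t1 - t0)/s = real l1 - real l2" "(t2 - t1)/n = real l2"
    using sn by (auto simp: t1_def t2_def)
  show ?thesis
  proof (cases "x = y")
    case True
    then show ?thesis using wc2[OF sg x, of y] common_self[OF x] ss_refl[OF x] r
      by (simp add: t0_def)
  next
    case False
    then show ?thesis using wc2[OF sg x, of y] common_val[OF x y False] r
      by (simp add: dd_def ss_def)
  qed
qed

lemma wc_even: assumes x: "x < n" and y: "y < n"
  shows "wc n E (2*j) x y = t0^j * dd x y + (t1^j - t0^j)/s * ss x y + (t2^j - t1^j)/n"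
  using y
proof (induction j arbitrary: y)
  case 0
  then show ?case by (simp add: dd_def)
next
  case (Suc j)
  have "wc n E (2 * Suc j) x y = wc n E (2*j + 2) x y" by simp
  also have "\<dots> = (\<Sum>z<n. wc n E (2*j) x z * wc n E 2 z y)" by (rule wc_add[OF Suc.prems])
  also have "\<dots> = (\<Sum>z<n. (t0^j * dd x z + (t1^j - t0^j)/s * ss x z + (t2^j - t1^j)/n)
       * (t0 * dd z y + (t1 - t0)/s * ss z y + (t2 - t1)/n))"
    using Suc.IH wc2_ev[OF _ Suc.prems] by (intro sum.cong) auto
  also have "\<dots> = t0^Suc j * dd x y + (t1^Suc j - t0^Suc j)/s * ss x y + (t2^Suc j - t1^Suc j)/n"
    by (subst mult_ev[OF x Suc.prems]) (simp add: algebra_simps)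
  finally show ?case .
qed

lemma trace_even: "(\<Sum>x<n. wc n E (2*j) x x) = (real n - p) * t0^j + (real p - 1) * t1^j + t2^j"
proof -
  have sn: "real s \<noteq> 0" "real n \<noteq> 0" using s_pos n_pos by auto
  have "(\<Sum>x<n. wc n E (2*j) x x) = (\<Sum>x<n. t0^j + (t1^j - t0^j)/s + (t2^j - t1^j)/n)"
    by (intro sum.cong) (auto simp: wc_even ss_refl)
  also have "\<dots> = n * (t0^j + (t1^j - t0^j)/s + (t2^j - t1^j)/n)" by simp
  also have "\<dots> = (real n - p) * t0^j + (real p - 1) * t1^j + t2^j"
    using sn n_real by (simp add: field_simps)
  finally show ?thesis .
qed

lemma row2: assumes x: "x < n" shows "(\<Sum>y<n. wc n E 2 y x) = real k * real k"
proof -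
  have "(\<Sum>y<n. wc n E 2 y x) = (\<Sum>y<n. \<Sum>z<n. av E y z * av E z x)"
  proof (rule sum.cong[OF refl])
    fix y assume y: "y \<in> {..<n}"
    have "wc n E 2 y x = wc n E (1+1) y x" by (simp only: one_add_one)
    also have "\<dots> = (\<Sum>z<n. wc n E 1 y z * wc n E 1 z x)" by (rule wc_add[OF x])
    also have "\<dots> = (\<Sum>z<n. av E y z * av E z x)"
    proof (rule sum.cong[OF refl])
      fix z assume "z \<in> {..<n}"
      then show "wc n E 1 y z * wc n E 1 z x = av E y z * av E z x"
        using y wc1[of y n E z] wc1[of z n E x] by (simp del: wc.simps)
    qed
    finally show "wc n E 2 y x = (\<Sum>z<n. av E y z * av E z x)" .
  qed
  also have "\<dots> = (\<Sum>z<n. (\<Sum>y<n. av E y z) * av E z x)"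
    by (subst sum.swap) (simp add: sum_distrib_right)
  also have "\<dots> = (\<Sum>z<n. real k * av E z x)"
  proof (rule sum.cong[OF refl])
    fix z assume z: "z \<in> {..<n}"
    have "(\<Sum>y<n. av E y z) = (\<Sum>y<n. av E z y)"
      by (rule sum.cong) (auto simp: av_def intro: E_sym)
    then show "(\<Sum>y<n. av E y z) * av E z x = real k * av E z x"
      using row_av[OF reg] z by simp
  qed
  also have "\<dots> = real k * real k"
  proof -
    have "(\<Sum>z<n. av E z x) = (\<Sum>z<n. av E x z)"
      by (rule sum.cong) (auto simp: av_def intro: E_sym)
    then show ?thesis using row_av[OF reg x] by (simp add: sum_distrib_left[symmetric])
  qed
  finally show ?thesis .
qed

lemma t2_val: "t2 = real k ^ 2"
proof -
  obtain x where x: "x < n" using n_pos by blast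
  have "(\<Sum>y<n. wc n E 2 y x) = (\<Sum>y<n. t0 * dd y x + (t1 - t0)/s * ss y x + (t2 - t1)/n)"
    using x by (intro sum.cong) (auto simp: wc2_ev)
  also have "\<dots> = t0 * (\<Sum>y<n. dd y x) + (t1 - t0)/s * (\<Sum>y<n. ss y x) + n * ((t2 - t1)/n)"
    by (simp add: sum.distrib sum_distrib_left)
  also have "(\<Sum>y<n. dd y x) = 1"
    using sum_dd_right[of "\<lambda>_. 1" x] x by simp
  also have "(\<Sum>y<n. ss y x) = s" by (rule sum_ss'[OF x])
  finally have "real k * real k = t0 + (t1 - t0) + (t2 - t1)"
    using row2[OF x] s_pos n_pos by simp
  then show ?thesis by (simp add: power2_eq_square)
qed

end

context dsetup begin

definition es :: "real list" where
  "es = real k # replicate m (sqrt (real k)) @ replicate k (-1) @ replicate m (- sqrt (real k))"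

lemma cp_es: "char_poly (adj_matrix n E) = (\<Prod>e\<leftarrow>es. [:- e, 1:])"
  unfolding cp es_def
  by (simp only: list.map map_append prod_list.Cons prod_list.append map_replicate
      prod_list_replicate minus_minus mult.assoc)

lemma trace_spec: "length es = n \<and> (\<Sum>x<n. wc n E j x x) = (\<Sum>e\<leftarrow>es. e^j)"
proof -
  have "length es = n \<and> (\<Sum>i<n. (adj_matrix n E ^\<^sub>m j)$$(i,i)) = (\<Sum>e\<leftarrow>es. e^j)"
    by (rule spectral_trace[OF adj_carrier cp_es])
  moreover have "(\<Sum>i<n. (adj_matrix n E ^\<^sub>m j)$$(i,i)) = (\<Sum>x<n. wc n E j x x)"
    by (intro sum.cong) (auto simp: adj_pow)
  ultimately show ?thesis by simp
qed

lemma n_val: "n = 2*m + k + 1"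
  using trace_spec[of 0] by (simp add: es_def)

lemma sum_es: "(\<Sum>e\<leftarrow>es. e^j) = real k ^ j + m * sqrt (real k) ^ j + k * (-1)^j + m * (- sqrt (real k))^j"
  by (simp add: es_def sum_list_replicate)

lemma trace_even_spec: "(\<Sum>x<n. wc n E (2*j) x x) = real k ^ (2*j) + 2 * m * real k ^ j + k"
proof -
  have r: "sqrt (real k) ^ (2*j) = real k ^ j" by (simp add: power_mult)
  have r2: "(- sqrt (real k)) ^ (2*j) = real k ^ j" by (simp add: power_mult)
  show ?thesis using trace_spec[of "2*j"] sum_es[of "2*j"] r r2 by (simp add: power_mult)
qed

lemma trace3_spec: "(\<Sum>x<n. wc n E 3 x x) = real k ^ 3 - k"
proof -
  have r: "sqrt (real k) ^ 3 = real k * sqrt (real k)"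
    by (simp add: power3_eq_cube)
  show ?thesis using trace_spec[of 3] sum_es[of 3] r by (simp add: power3_eq_cube)
qed

lemma eqs: "(real n - p) * t0^j + (real p - 1) * t1^j = 2 * m * real k ^ j + k"
  using trace_even[of j] trace_even_spec[of j] t2_val by (simp add: power_mult)

lemma g_zero: "((t0 - k) * (t0 - 1)) ^ 2 = 0 \<and> ((t1 - k) * (t1 - 1)) ^ 2 = 0"
proof -
  define K where "K = real k"
  define M where "M = real m"
  define A where "A = real n - real p"
  define B where "B = real p - 1"
  have e0: "A + B = 2*M + K" using n_val by (simp add: A_def B_def M_def K_def)
  have e: "\<And>j. A * t0^j + B * t1^j = 2*M*K^j + K" using eqs by (simp add: A_def B_def M_def K_def)
  have "A * ((t0 - K) * (t0 - 1)) ^ 2 + B * ((t1 - K) * (t1 - 1)) ^ 2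
     = (A * t0^4 + B * t1^4) - 2*(K+1) * (A * t0^3 + B * t1^3) + (K^2+4*K+1) * (A * t0^2 + B * t1^2)
       - 2*K*(K+1) * (A * t0^1 + B * t1^1) + K^2 * (A + B)"
    by (simp add: algebra_simps eval_nat_numeral)
  also have "\<dots> = 0" unfolding e e0 by (simp add: algebra_simps eval_nat_numeral)
  finally have z: "A * ((t0 - K) * (t0 - 1)) ^ 2 + B * ((t1 - K) * (t1 - 1)) ^ 2 = 0" .
  have Ap: "A > 0" using n_eq s2 cP by (simp add: A_def)
  have Bp: "B > 0" using cP by (simp add: B_def)
  have "A * ((t0 - K) * (t0 - 1)) ^ 2 \<ge> 0" "B * ((t1 - K) * (t1 - 1)) ^ 2 \<ge> 0"
    using Ap Bp by auto
  then have "A * ((t0 - K) * (t0 - 1)) ^ 2 = 0" "B * ((t1 - K) * (t1 - 1)) ^ 2 = 0"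
    using z by linarith+
  then show ?thesis using Ap Bp by (simp add: K_def)
qed

end

context dsetup begin

lemma t_cases: "(t0 = real k \<or> t0 = 1) \<and> (t1 = real k \<or> t1 = 1) \<and> t0 \<noteq> t1"
proof -
  have "t1 - t0 = real s * (real l1 - real l2)" by (simp add: t1_def)
  moreover have "real l1 - real l2 \<noteq> 0" using ne by simp
  ultimately have "t0 \<noteq> t1" using s_pos by auto
  then show ?thesis using g_zero by auto
qed

lemma case_B_impossible: "\<not> (t0 = 1 \<and> t1 = real k)"
proof
  assume h: "t0 = 1 \<and> t1 = real k"
  then have k1: "k \<noteq> 1" using t_cases by auto
  have l1: "real l1 = real k - 1" using h by (simp add: t0_def)
  have a: "real s * real l2 = (real s - 1) * (real k - 1)"
    using h l1 by (simp add: t1_def t0_def algebra_simps)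
  have "t2 = real k + real n * real l2" using h by (simp add: t2_def)
  then have b: "real n * real l2 = real k * (real k - 1)" using t2_val by (simp add: power2_eq_square algebra_simps)
  have "real p * (real s - 1) * (real k - 1) = real p * (real s * real l2)" using a by simp
  also have "\<dots> = real n * real l2" using n_real by simp
  also have "\<dots> = real k * (real k - 1)" using b by simp
  finally have "real p * (real s - 1) * (real k - 1) = real k * (real k - 1)" .
  moreover have "real k - 1 \<noteq> 0" using k1 by simp
  ultimately have c: "real p * (real s - 1) = real k" by simp
  have "s \<ge> 1" using s2 by simp
  then have "real (p * (s - 1)) = real k" using c by (simp add: of_nat_diff)
  then have kp: "k = p * (s - 1)" by (metis of_nat_eq_iff)
  have "int p dvd int k" using kp by simp
  then have d1: "int p dvd int k ^ 2" by (simp add: power2_eq_square)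
  have "int p dvd int n" using n_eq by simp
  then have d2: "int p dvd int k ^ 2 - 1" using dv dvd_trans by blast
  have "int p dvd int k ^ 2 - (int k ^ 2 - 1)" using dvd_diff[OF d1 d2] .
  then have "int p dvd 1" by simp
  then have "p = 1" by simp
  then show False using cP by simp
qed

lemma params: "l1 = 0 \<and> s * l2 + 1 = k \<and> n * l2 + 1 = k^2 \<and> p = k + 1 \<and> l2 \<ge> 1"
proof -
  have h: "t0 = real k \<and> t1 = 1" using t_cases case_B_impossible by auto
  have t1e: "t1 = t0 + real s * (real l1 - real l2)" by (simp add: t1_def)
  have l1: "l1 = 0" using h by (simp add: t0_def)
  have "real s * (0 - real l2) = 1 - real k" using h t1e l1 by simp
  then have "real (s * l2 + 1) = real k" by (simp add: algebra_simps)
  then have a: "s * l2 + 1 = k" by (simp only: of_nat_eq_iff)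
  have "t2 = 1 + real n * real l2" using h by (simp add: t2_def)
  then have "real (n * l2 + 1) = real (k^2)" using t2_val by simp
  then have b: "n * l2 + 1 = k^2" by (simp only: of_nat_eq_iff)
  have l2: "l2 \<ge> 1" using ne l1 by simp
  have "p * (s * l2) + 1 = k^2" using b n_eq by (simp add: mult.assoc)
  moreover have "s * l2 = k - 1" using a by simp
  ultimately have "p * (k - 1) + 1 = k * k" by (simp add: power2_eq_square)
  moreover have "k \<ge> 2"
  proof -
    have "s \<le> s * l2" using l2 by (metis mult_le_mono2 mult.right_neutral)
    then show ?thesis using a s2 by linarith
  qed
  ultimately have "p = k + 1"
  proof -
    assume e: "p * (k - 1) + 1 = k * k" and k2: "k \<ge> 2"
    obtain j where j: "k = j + 2" using k2 by (metis add.commute le_Suc_ex)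
    have "p * (j + 1) + 1 = (j+2)*(j+2)" using e j by simp
    then have "p * (j + 1) = (j + 3) * (j + 1)" by (simp add: algebra_simps)
    then have "p = j + 3" using mult_right_cancel[of "j+1" p "j+3"] by simp
    then show ?thesis using j by simp
  qed
  then show ?thesis using l1 a b l2 by simp
qed

lemma no_internal: assumes "E x y" shows "\<not> same x y"
proof -
  have l1: "l1 = 0" and a: "s * l2 + 1 = k" and b: "n * l2 + 1 = k^2" and l2: "l2 \<ge> 1"
    using params by auto
  have tm: "\<And>x z. x < n \<Longrightarrow> z < n \<Longrightarrow> wc n E 2 x z * wc n E 1 z x
      = real l2 * av E z x - real l2 * (av E z x * ss x z)"
  proof -
    fix x z assume x: "x < n" and z: "z < n"
    show "wc n E 2 x z * wc n E 1 z x = real l2 * av E z x - real l2 * (av E z x * ss x z)"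
    proof (cases "E z x")
      case True
      then have "x \<noteq> z" using E_irr by auto
      then show ?thesis using True wc2[OF sg x, of z] common_val[OF x z] wc1[OF z, of E x] l1
        by (simp add: av_def ss_def del: wc.simps)
    next
      case False
      then show ?thesis using wc1[OF z, of E x] by (simp add: av_def del: wc.simps)
    qed
  qed
  have colsum: "\<And>x. x < n \<Longrightarrow> (\<Sum>z<n. av E z x) = real k"
  proof -
    fix x assume x: "x < n"
    have "(\<Sum>z<n. av E z x) = (\<Sum>z<n. av E x z)"
      by (rule sum.cong) (auto simp: av_def intro: E_sym)
    then show "(\<Sum>z<n. av E z x) = real k" using row_av[OF reg x] by simp
  qed
  have "(\<Sum>x<n. wc n E 3 x x) = (\<Sum>x<n. \<Sum>z<n. wc n E 2 x z * wc n E 1 z x)"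
  proof (rule sum.cong[OF refl])
    fix x assume "x \<in> {..<n}"
    then show "wc n E 3 x x = (\<Sum>z<n. wc n E 2 x z * wc n E 1 z x)"
      using wc_add[of x n E 2 1] by (simp add: numeral_3_eq_3 del: wc.simps)
  qed
  also have "\<dots> = (\<Sum>x<n. \<Sum>z<n. real l2 * av E z x - real l2 * (av E z x * ss x z))"
    using tm by (intro sum.cong) auto
  also have "\<dots> = real l2 * (\<Sum>x<n. \<Sum>z<n. av E z x) - real l2 * (\<Sum>x<n. \<Sum>z<n. av E z x * ss x z)"
    by (simp add: sum_subtractf sum_distrib_left)
  also have "(\<Sum>x<n. \<Sum>z<n. av E z x) = real n * real k"
    using colsum by simp
  finally have eq: "real k ^ 3 - k = real l2 * (real n * real k) - real l2 * (\<Sum>x<n. \<Sum>z<n. av E z x * ss x z)"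
    using trace3_spec by simp
  have "real (n * l2 + 1) = real (k^2)" using b by simp
  then have "real n * real l2 = real k ^ 2 - 1" by simp
  moreover have "real l2 * (real n * real k) = (real n * real l2) * real k" by (simp only: mult_ac)
  ultimately have "real l2 * (real n * real k) = (real k ^ 2 - 1) * real k" by simp
  then have "real l2 * (real n * real k) = real k ^ 3 - k" by (simp add: algebra_simps power2_eq_square power3_eq_cube)
  then have "real l2 * (\<Sum>x<n. \<Sum>z<n. av E z x * ss x z) = 0" using eq by simp
  then have z: "(\<Sum>x<n. \<Sum>z<n. av E z x * ss x z) = 0" using l2 by simp
  have nn: "\<And>x z. av E z x * ss x z \<ge> 0" by (simp add: av_def ss_def)
  have xy: "x < n" "y < n" using E_lt assms by auto
  have "(\<Sum>z<n. av E z y * ss y z) = 0"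
    using z xy by (subst (asm) sum_nonneg_eq_0_iff) (auto intro!: sum_nonneg nn)
  then have "av E x y * ss y x = 0"
    using xy by (subst (asm) sum_nonneg_eq_0_iff) (auto intro: nn)
  then show ?thesis using assms E_sym by (auto simp: av_def ss_def dest: same_sym)
qed

end

context dsetup begin

lemma l1_0: "l1 = 0" and sl2: "s * l2 + 1 = k" and nl2: "n * l2 + 1 = k^2" and pk: "p = k + 1"
  and l2_pos: "l2 \<ge> 1"
  using params by auto

lemma fin_nb: "finite {z. z < n \<and> Q z}" by simp

lemma common_pos: assumes "x < n" "y < n" "x \<noteq> y" "\<not> same x y"
  shows "\<exists>z. E x z \<and> E y z"
proof -
  have "card {z. z < n \<and> E x z \<and> E y z} = l2" using common_val assms by simp
  then have "{z. z < n \<and> E x z \<and> E y z} \<noteq> {}" using l2_pos by (metis card.empty not_one_le_zero)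
  then show ?thesis by auto
qed

lemma common_zero: assumes "x < n" "y < n" "x \<noteq> y" "same x y"
  shows "\<not> (E x z \<and> E y z)"
proof
  assume h: "E x z \<and> E y z"
  have "card {z. z < n \<and> E x z \<and> E y z} = 0" using common_val assms l1_0 by simp
  then have "{z. z < n \<and> E x z \<and> E y z} = {}" using fin_nb by simp
  then show False using h E_lt by auto
qed

lemma C1: assumes "E x z" "E x w" "z \<noteq> w" shows "\<not> same z w"
  using common_zero[of z w x] assms E_lt E_sym by blast

lemma deg: "y < n \<Longrightarrow> card {z. z < n \<and> E y z} = k"
  using reg by (simp add: regular_graph_def)

definition blk :: "nat \<Rightarrow> nat set" where "blk z = (THE B. B \<in> P \<and> z \<in> B)"

lemma blk: "z < n \<Longrightarrow> blk z \<in> P \<and> z \<in> blk z"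
  unfolding blk_def using ex_block block_uniq by (metis (mono_tags, lifting) theI)

lemma C2: assumes y: "y < n" and B: "B \<in> P" and yB: "y \<notin> B"
  shows "\<exists>z. E y z \<and> z \<in> B"
proof -
  let ?N = "{z. z < n \<and> E y z}"
  have sub: "blk ` ?N \<subseteq> P - {blk y}"
  proof
    fix C assume "C \<in> blk ` ?N"
    then obtain z where z: "z < n" "E y z" and C: "C = blk z" by auto
    have "\<not> same y z" using no_internal z(2) .
    then have "blk z \<noteq> blk y" using blk[OF z(1)] blk[OF y] unfolding same_def by metis
    then show "C \<in> P - {blk y}" using blk[OF z(1)] C by auto
  qed
  have inj: "inj_on blk ?N"
  proof (rule inj_onI)
    fix z w assume z: "z \<in> ?N" and w: "w \<in> ?N" and e: "blk z = blk w"
    have "same z w" using blk[of z] blk[of w] z w e unfolding same_def by auto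
    then show "z = w" using C1[of y z w] z w by auto
  qed
  have "card (blk ` ?N) = k" using card_image[OF inj] deg[OF y] by simp
  moreover have "card (P - {blk y}) = k" using pk blk[OF y] finP by simp
  ultimately have eq: "blk ` ?N = P - {blk y}"
    using sub finP by (metis card_subset_eq finite_Diff)
  have "B \<noteq> blk y" using blk[OF y] yB by auto
  then have "B \<in> blk ` ?N" using eq B by auto
  then obtain z where z: "z < n" "E y z" "B = blk z" by auto
  then show ?thesis using blk[OF z(1)] by auto
qed

definition cat :: "nat \<Rightarrow> nat \<Rightarrow> nat" where
  "cat x y = (if x = y then 0 else if E x y then 1 else if same x y then 3 else 2)"

lemma walk1: "walk n E (Suc 0) x y \<longleftrightarrow> E x y"
  using E_lt by auto

lemma walk2: "walk n E (Suc (Suc 0)) x y \<longleftrightarrow> (\<exists>z. E x z \<and> E z y)"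
  using E_lt by auto

lemma walk_cat: assumes x: "x < n" and y: "y < n" shows "walk n E (cat x y) x y"
proof -
  consider (a) "x = y" | (b) "x \<noteq> y" "E x y" | (c) "x \<noteq> y" "\<not> E x y" "\<not> same x y"
    | (d) "x \<noteq> y" "\<not> E x y" "same x y" by blast
  then show ?thesis
  proof cases
    case a then show ?thesis by (simp add: cat_def)
  next
    case b then show ?thesis using walk1 by (simp add: cat_def)
  next
    case c
    then obtain z where "E x z" "E y z" using common_pos x y by blast
    then show ?thesis using c walk2 E_sym by (auto simp: cat_def numeral_2_eq_2)
  next
    case d
    have "card {z. z < n \<and> E x z} = k" using deg[OF x] .
    moreover have "k \<ge> 1" using sl2 by simp
    ultimately have "{z. z < n \<and> E x z} \<noteq> {}" by (metis card.empty not_one_le_zero)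
    then obtain u where u: "u < n" "E x u" by auto
    have nsux: "\<not> same u x" using no_internal[OF u(2)] same_sym by blast
    then have nsuy: "\<not> same u y" using d(3) same_sym same_trans by blast
    have uy: "u \<noteq> y" using nsuy same_refl u(1) by blast
    have nEuy: "\<not> E u y" using C1[of u x y] u(2) E_sym d by blast
    obtain v where v: "E u v" "E y v" using common_pos[OF u(1) y uy nsuy] by blast
    have vn: "v < n" using E_lt v(1) by blast
    have Evy: "E v y" using E_sym v(2) by blast
    have "walk n E 3 x y" using u vn Evy v(1) y
      by (simp add: numeral_3_eq_3) blast
    then show ?thesis using d by (simp add: cat_def)
  qed
qed

lemma no_walk: assumes x: "x < n" and y: "y < n" and i: "i < cat x y"
  shows "\<not> walk n E i x y"
proof
  assume w: "walk n E i x y"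
  have xy: "x \<noteq> y" using i by (auto simp: cat_def)
  have "i = 0 \<or> i = 1 \<or> i = 2" using i by (auto simp: cat_def split: if_splits)
  then show False
  proof (elim disjE)
    assume "i = 0" then show False using w xy by simp
  next
    assume i1: "i = 1" then have "E x y" using w walk1 by simp
    then show False using i i1 xy by (simp add: cat_def)
  next
    assume i2: "i = 2"
    then obtain z where z: "E x z" "E z y" using w walk2 by (auto simp: numeral_2_eq_2)
    have "\<not> E x y" "same x y" using i i2 xy by (auto simp: cat_def split: if_splits)
    then show False using common_zero[OF x y xy] z E_sym by blast
  qed
qed

lemma gdist_cat: assumes x: "x < n" and y: "y < n" shows "gdist n E x y = cat x y"
  unfolding gdist_def
proof (rule Least_equality)
  show "walk n E (cat x y) x y" by (rule walk_cat[OF x y])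
  fix i assume "walk n E i x y"
  then show "cat x y \<le> i" using no_walk[OF x y] by (meson not_le)
qed

lemma cat_le3: "cat x y \<le> 3" by (simp add: cat_def)

lemma exists_pair: "\<exists>x y. x < n \<and> y < n \<and> x \<noteq> y \<and> same x y"
proof -
  have "P \<noteq> {}" using cP by auto
  then obtain B where B: "B \<in> P" by auto
  have cB': "card B = s" using cB B by simp
  then have "B \<noteq> {}" using s2 by auto
  then obtain x where x: "x \<in> B" by auto
  have fB: "finite B" using B block_sub finite_subset by blast
  have "card (B - {x}) = s - 1" using cB' x fB by simp
  then have "card (B - {x}) \<noteq> 0" using s2 by simp
  then have "B - {x} \<noteq> {}" by (metis card.empty)
  then obtain y where y: "y \<in> B" "y \<noteq> x" by auto
  have "x < n" "y < n" using block_sub[OF B] x y by auto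
  then show ?thesis using x y B unfolding same_def by blast
qed

lemma diam: "diameter n E = 3"
proof -
  let ?S = "{gdist n E x y | x y. x < n \<and> y < n}"
  have sub: "?S \<subseteq> {0..3}" using gdist_cat cat_le3 by auto
  have fin: "finite ?S" using sub finite_subset by blast
  obtain x y where xy: "x < n" "y < n" "x \<noteq> y" "same x y" using exists_pair by blast
  have "\<not> E x y" using no_internal xy(4) by blast
  then have "gdist n E x y = 3" using gdist_cat[OF xy(1,2)] xy by (simp add: cat_def)
  then have "\<exists>a b. 3 = gdist n E a b \<and> a < n \<and> b < n" using xy by metis
  then have "3 \<in> ?S" by simp
  then show ?thesis unfolding diameter_def
    by (intro Max_eqI[OF fin]) (use gdist_cat cat_le3 in auto)
qed

end

context dsetup begin

definition Z :: "nat \<Rightarrow> nat \<Rightarrow> nat \<Rightarrow> nat set" where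
  "Z x y j = {z. z < n \<and> E y z \<and> cat x z = j}"

lemma finZ: "finite (Z x y j)" by (simp add: Z_def)

lemma Zsum: assumes y: "y < n"
  shows "card (Z x y 0) + card (Z x y 1) + card (Z x y 2) + card (Z x y 3) = k"
proof -
  have "{z. z < n \<and> E y z} = ((Z x y 0 \<union> Z x y 1) \<union> Z x y 2) \<union> Z x y 3"
    using cat_le3 unfolding Z_def by (auto simp: le_Suc_eq numeral_3_eq_3 numeral_2_eq_2)
  moreover have "card (((Z x y 0 \<union> Z x y 1) \<union> Z x y 2) \<union> Z x y 3)
      = card (Z x y 0) + card (Z x y 1) + card (Z x y 2) + card (Z x y 3)"
    by (subst card_Un_disjoint, simp_all add: finZ, (auto simp: Z_def)[1])+
  ultimately show ?thesis using deg[OF y] by simp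
qed

lemma Z_big: assumes "j \<ge> 4" shows "Z x y j = {}"
proof -
  { fix z assume "z \<in> Z x y j"
    then have "cat x z = j" by (simp add: Z_def)
    then have False using cat_le3[of x z] assms by simp }
  then show ?thesis by blast
qed

lemma cZ0: assumes x: "x < n" shows "card (Z x y 0) = (if E y x then 1 else 0)"
proof -
  have "Z x y 0 = (if E y x then {x} else {})"
    using x unfolding Z_def by (auto simp: cat_def split: if_splits)
  then show ?thesis by simp
qed

lemma cZ1: assumes x: "x < n" and y: "y < n"
  shows "card (Z x y 1) = (if x = y then k else if same x y then 0 else l2)"
proof -
  have "Z x y 1 = {z. z < n \<and> E x z \<and> E y z}"
    unfolding Z_def using E_irr by (auto simp: cat_def split: if_splits)
  then show ?thesis using common_val[OF x y] common_self[OF x] l1_0 by auto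
qed

lemma cZ3: assumes x: "x < n" and y: "y < n"
  shows "card (Z x y 3) = (if same x y \<or> E y x then 0 else 1)"
proof -
  have Z3: "Z x y 3 = {z. z < n \<and> E y z \<and> z \<noteq> x \<and> same x z}"
    unfolding Z_def using no_internal by (auto simp: cat_def split: if_splits)
  show ?thesis
  proof (cases "same x y")
    case True
    have "Z x y 3 = {}"
    proof -
      { fix z assume "z \<in> Z x y 3"
        then have "E y z" "same x z" using Z3 by auto
        then have False using True no_internal same_sym same_trans by blast }
      then show ?thesis by blast
    qed
    then show ?thesis using True by simp
  next
    case F: False
    show ?thesis
    proof (cases "E y x")
      case True
      have "Z x y 3 = {}"
      proof -
        { fix z assume "z \<in> Z x y 3"
          then have "E y z" "same x z" "z \<noteq> x" using Z3 by auto
          then have False using True C1[of y x z] by blast }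
        then show ?thesis by blast
      qed
      then show ?thesis using True by simp
    next
      case nE: False
      have b: "blk x \<in> P" "x \<in> blk x" using blk[OF x] by auto
      have "y \<notin> blk x" using F b unfolding same_def by blast
      then obtain z where z: "E y z" "z \<in> blk x" using C2[OF y b(1)] by blast
      have zn: "z < n" using E_lt z(1) by blast
      have zx: "z \<noteq> x" using z(1) nE by blast
      have sxz: "same x z" using b z(2) unfolding same_def by blast
      have "Z x y 3 = {z}"
      proof
        show "{z} \<subseteq> Z x y 3" using Z3 zn z(1) zx sxz by auto
        show "Z x y 3 \<subseteq> {z}"
        proof
          fix w assume "w \<in> Z x y 3"
          then have w: "E y w" "same x w" using Z3 by auto
          have "same z w" using sxz w(2) same_sym same_trans by blast
          then show "w \<in> {z}" using C1[of y z w] z(1) w(1) by blast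
        qed
      qed
      then show ?thesis using F nE by simp
    qed
  qed
qed

lemma cat_cases:
  "(cat x y = 0 \<longleftrightarrow> x = y) \<and> (cat x y = 1 \<longleftrightarrow> x \<noteq> y \<and> E x y) \<and>
   (cat x y = 2 \<longleftrightarrow> x \<noteq> y \<and> \<not> E x y \<and> \<not> same x y) \<and>
   (cat x y = 3 \<longleftrightarrow> x \<noteq> y \<and> \<not> E x y \<and> same x y)"
  by (simp add: cat_def)

lemma setj: assumes x: "x < n"
  shows "{z. z < n \<and> E y z \<and> gdist n E x z = j} = Z x y j"
  unfolding Z_def using gdist_cat[OF x] by auto

lemma setc: assumes x: "x < n"
  shows "{z. z < n \<and> E y z \<and> gdist n E x z + 1 = Suc j} = Z x y j"
  unfolding Z_def using gdist_cat[OF x] by auto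

lemma setc0: "{z. z < n \<and> E y z \<and> gdist n E x z + 1 = 0} = {}" by auto

definition bi :: "nat \<Rightarrow> nat" where
  "bi i = (if i = 0 then k else if i = 1 then k - 1 - l2 else if i = 2 then 1 else 0)"
definition ai :: "nat \<Rightarrow> nat" where
  "ai i = (if i = 1 then l2 else if i = 2 then k - l2 - 1 else 0)"
definition ci :: "nat \<Rightarrow> nat" where
  "ci i = (if i = 1 then 1 else if i = 2 then l2 else if i = 3 then k else 0)"

lemma inter_nums:
  assumes i: "i \<le> 3" and x: "x < n" and y: "y < n" and g: "gdist n E x y = i"
  shows "card {z. z < n \<and> E y z \<and> gdist n E x z = i + 1} = bi i \<and>
         card {z. z < n \<and> E y z \<and> gdist n E x z = i} = ai i \<and>
         card {z. z < n \<and> E y z \<and> gdist n E x z + 1 = i} = ci i"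
proof -
  have c: "cat x y = i" using g gdist_cat[OF x y] by simp
  have A: "card {z. z < n \<and> E y z \<and> gdist n E x z = i + 1} = card (Z x y (i+1))"
    using setj[OF x] by simp
  have B: "card {z. z < n \<and> E y z \<and> gdist n E x z = i} = card (Z x y i)"
    using setj[OF x] by simp
  have C: "card {z. z < n \<and> E y z \<and> gdist n E x z + 1 = i} = (if i = 0 then 0 else card (Z x y (i-1)))"
  proof (cases i)
    case 0 then show ?thesis using setc0 by simp
  next
    case (Suc j) then show ?thesis using setc[OF x, of y j] by simp
  qed
  have S: "card (Z x y 0) + card (Z x y 1) + card (Z x y 2) + card (Z x y 3) = k"
    by (rule Zsum[OF y])
  have "i = 0 \<or> i = 1 \<or> i = 2 \<or> i = 3" using i by auto
  then show ?thesis
  proof (elim disjE)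
    assume i0: "i = 0"
    then have "cat x y = 0" using c by simp
    then have xy: "x = y" using cat_cases[of x y] by blast
    have z1: "card (Z x y 1) = k" using cZ1[OF x y] xy by simp
    have z0: "card (Z x y 0) = 0" using cZ0[OF x, of y] xy E_irr by simp
    show ?thesis unfolding A B C using i0 z0 z1 by (simp add: bi_def ai_def ci_def)
  next
    assume i1: "i = 1"
    then have "cat x y = 1" using c by simp
    then have h: "x \<noteq> y" "E x y" using cat_cases[of x y] by blast+
    then have h2: "\<not> same x y" "E y x" using no_internal[OF h(2)] E_sym[OF h(2)] by auto
    have z0: "card (Z x y 0) = 1" using cZ0[OF x, of y] h2 by simp
    have z1: "card (Z x y 1) = l2" using cZ1[OF x y] h h2 by simp
    have z3: "card (Z x y 3) = 0" using cZ3[OF x y] h2 by simp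
    have z2: "card (Z x y 2) = k - 1 - l2" using S z0 z1 z3 by linarith
    show ?thesis unfolding A B C using i1 z0 z1 z2 by (simp add: bi_def ai_def ci_def numeral_2_eq_2)
  next
    assume i2: "i = 2"
    then have "cat x y = 2" using c by simp
    then have h: "x \<noteq> y" "\<not> E x y" "\<not> same x y" using cat_cases[of x y] by blast+
    then have h2: "\<not> E y x" using E_sym by blast
    have z0: "card (Z x y 0) = 0" using cZ0[OF x, of y] h2 by simp
    have z1: "card (Z x y 1) = l2" using cZ1[OF x y] h by simp
    have z3: "card (Z x y 3) = 1" using cZ3[OF x y] h h2 by simp
    have z2: "card (Z x y 2) = k - l2 - 1" using S z0 z1 z3 by linarith
    have e: "(2::nat) + 1 = 3" "(2::nat) - 1 = 1" by simp_all
    show ?thesis unfolding A B C using i2 z1 z2 z3 by (simp add: bi_def ai_def ci_def e)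
  next
    assume i3: "i = 3"
    then have "cat x y = 3" using c by simp
    then have h: "x \<noteq> y" "\<not> E x y" "same x y" using cat_cases[of x y] by blast+
    then have h2: "\<not> E y x" using E_sym by blast
    have z0: "card (Z x y 0) = 0" using cZ0[OF x, of y] h2 by simp
    have z1: "card (Z x y 1) = 0" using cZ1[OF x y] h by simp
    have z3: "card (Z x y 3) = 0" using cZ3[OF x y] h by simp
    have z2: "card (Z x y 2) = k" using S z0 z1 z3 by linarith
    have z4: "card (Z x y 4) = 0" using Z_big[of 4 x y] by simp
    have e: "(3::nat) + 1 = 4" "(3::nat) - 1 = 2" by simp_all
    show ?thesis unfolding A B C using i3 z2 z3 z4 by (simp add: bi_def ai_def ci_def e)
  qed
qed

theorem main:
  "\<exists>ai bi ci. distance_regular n E 3 ai bi ci \<and> antipodal n E \<and>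
           ai 1 = (k ^ 2 - 1) div n \<and> ci 2 = (k ^ 2 - 1) div n"
proof (intro exI conjI)
  have conn: "graph_connected n E"
    unfolding graph_connected_def using walk_cat by blast
  show "distance_regular n E 3 ai bi ci"
    unfolding distance_regular_def
  proof (intro conjI)
    show "graph_connected n E" by (rule conn)
    show "diameter n E = 3" by (rule diam)
    show "\<forall>i\<le>3. \<forall>x y. x < n \<longrightarrow> y < n \<longrightarrow> gdist n E x y = i \<longrightarrow>
        card {z. z < n \<and> E y z \<and> gdist n E x z = i + 1} = bi i \<and>
        card {z. z < n \<and> E y z \<and> gdist n E x z = i} = ai i \<and>
        card {z. z < n \<and> E y z \<and> gdist n E x z + 1 = i} = ci i"
      by (intro allI impI) (rule inter_nums; assumption)
  qed
  show "antipodal n E"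
    unfolding antipodal_def union_of_cliques_def diam
  proof (intro exI conjI allI impI)
    show "partition_on {0..<n} P" by (rule part)
    fix x y assume x: "x < n" and y: "y < n"
    show "(gdist n E x y = 3) = (x \<noteq> y \<and> (\<exists>B\<in>P. x \<in> B \<and> y \<in> B))"
      using gdist_cat[OF x y] no_internal by (auto simp: cat_def same_def)
  qed
  have "k ^ 2 - 1 = n * l2" using nl2 by simp
  then have d: "(k ^ 2 - 1) div n = l2" using n_pos by simp
  show "ai 1 = (k ^ 2 - 1) div n" using d by (simp add: ai_def)
  show "ci 2 = (k ^ 2 - 1) div n" using d by (simp add: ci_def)
qed

end

lemma mk:
  assumes sg: "simple_graph n E" and reg: "regular_graph n E k"
    and ab: "\<forall>x y. x < n \<longrightarrow> y < n \<longrightarrow> x \<noteq> y \<longrightarrow> common_nbrs n E x y = v \<or> common_nbrs n E x y = w"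
    and R: "\<And>x y. R x y \<longleftrightarrow> x < n \<and> y < n \<and> x \<noteq> y \<and> common_nbrs n E x y = v"
    and ec: "equal_cliques n R" and vw: "v \<noteq> w"
    and cp: "char_poly (adj_matrix n E) =
           [:- real k, 1:] * [:- sqrt (real k), 1:] ^ m * [:1, 1:] ^ k * [:sqrt (real k), 1:] ^ m"
    and dv: "int n dvd int k ^ 2 - 1"
  shows "\<exists>ai bi ci. distance_regular n E 3 ai bi ci \<and> antipodal n E \<and>
           ai 1 = (k ^ 2 - 1) div n \<and> ci 2 = (k ^ 2 - 1) div n"
proof -
  from ec obtain P s where part: "partition_on {0..<n} P" and cP: "card P \<ge> 2" and s2: "s \<ge> 2"
    and cB: "\<forall>B\<in>P. card B = s"
    and RP: "\<forall>x y. x < n \<longrightarrow> y < n \<longrightarrow> (R x y \<longleftrightarrow> x \<noteq> y \<and> (\<exists>B\<in>P. x \<in> B \<and> y \<in> B))"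
    unfolding equal_cliques_def by blast
  have cn: "\<forall>x y. x < n \<longrightarrow> y < n \<longrightarrow> x \<noteq> y \<longrightarrow>
              common_nbrs n E x y = (if (\<exists>B\<in>P. x \<in> B \<and> y \<in> B) then v else w)"
  proof (intro allI impI)
    fix x y assume x: "x < n" and y: "y < n" and xy: "x \<noteq> y"
    show "common_nbrs n E x y = (if (\<exists>B\<in>P. x \<in> B \<and> y \<in> B) then v else w)"
      using RP x y xy R[of x y] ab x y xy by auto
  qed
  interpret dsetup n E k P s v w m
    by (unfold_locales) (use sg reg part cP s2 cB cn vw cp dv in auto)
  show ?thesis by (rule main)
qed

theorem corollary2:
  fixes n k b a m :: nat and E :: "nat \<Rightarrow> nat \<Rightarrow> bool"
  assumes "divisible_design_graph n E k b a"
    and "char_poly (adj_matrix n E) =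
           [:- real k, 1:] * [:- sqrt (real k), 1:] ^ m * [:1, 1:] ^ k * [:sqrt (real k), 1:] ^ m"
    and "int n dvd int k ^ 2 - 1"
  shows "\<exists>ai bi ci. distance_regular n E 3 ai bi ci \<and> antipodal n E \<and>
           ai 1 = (k ^ 2 - 1) div n \<and> ci 2 = (k ^ 2 - 1) div n"
proof -
  have d: "deza_graph n E k b a" and ba: "b > a"
    and ch: "(equal_complete_multipartite n (child_A n E a) \<and> equal_cliques n (child_B n E b)) \<or>
      (equal_complete_multipartite n (child_B n E b) \<and> equal_cliques n (child_A n E a))"
    using assms(1) unfolding divisible_design_graph_def by auto
  have sg: "simple_graph n E" and reg: "regular_graph n E k"
    and ab: "\<forall>x y. x < n \<longrightarrow> y < n \<longrightarrow> x \<noteq> y \<longrightarrow> common_nbrs n E x y = b \<or> common_nbrs n E x y = a"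
    using d unfolding deza_graph_def by auto
  from ch show ?thesis
  proof (elim disjE conjE)
    assume ec: "equal_cliques n (child_B n E b)"
    have R: "\<And>x y. child_B n E b x y \<longleftrightarrow> x < n \<and> y < n \<and> x \<noteq> y \<and> common_nbrs n E x y = b"
      by (simp add: child_B_def)
    have vw: "b \<noteq> a" using ba by simp
    show ?thesis by (rule mk[OF sg reg ab R ec vw assms(2,3)])
  next
    assume ec: "equal_cliques n (child_A n E a)"
    have ab': "\<forall>x y. x < n \<longrightarrow> y < n \<longrightarrow> x \<noteq> y \<longrightarrow> common_nbrs n E x y = a \<or> common_nbrs n E x y = b"
      using ab by blast
    have R: "\<And>x y. child_A n E a x y \<longleftrightarrow> x < n \<and> y < n \<and> x \<noteq> y \<and> common_nbrs n E x y = a"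
      by (simp add: child_A_def)
    have vw: "a \<noteq> b" using ba by simp
    show ?thesis by (rule mk[OF sg reg ab' R ec vw assms(2,3)])
  qed
qed

end
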